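(* Let $\beta>0$, $C>0$, and let $\{a_j\}_{j\ge1}$ be a monotone non-increasing sequence with $0\le a_j\le C\,j^{-1-\beta}$ for all $j$. Then for any positive integers $k,m$ and any $\nu\in[1,1+\beta)$, $$\sum_{j=m}^\infty[a_j-a_{j+k}]\,j^\nu\le C\,k\,\frac{\beta+1}{\beta+1-\nu}\,m^{\nu-1-\beta}<\infty.$$ *)

theory Defs
  imports "HOL-Analysis.Analysis"
begin

end

theory Submission imports Defs begin

lemma L1:
  fixes x \<nu> :: real assumes "x \<ge> 1" "\<nu> \<ge> 1"
  shows "(x+1) powr \<nu> - x powr \<nu> \<le> \<nu> * (x+1) powr (\<nu>-1)"
proof -
  have "\<exists>z. x < z \<and> z < x+1 \<and> ((x+1) powr \<nu> - x powr \<nu> = (x+1-x) * (\<nu> * z powr (\<nu>-1)))"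
    by (rule MVT2) (use assms in \<open>auto intro!: has_real_derivative_powr\<close>)
  then obtain z where z: "x < z" "z < x+1" "(x+1) powr \<nu> - x powr \<nu> = \<nu> * z powr (\<nu>-1)" by auto
  have "z powr (\<nu>-1) \<le> (x+1) powr (\<nu>-1)" using z assms by (intro powr_mono2) auto
  then show ?thesis using z assms by (simp add: mult_left_mono)
qed

lemma L2:
  fixes x s :: real assumes "x \<ge> 1" "s > 0"
  shows "s * (x+1) powr (-s-1) \<le> x powr (-s) - (x+1) powr (-s)"
proof -
  have "\<exists>z. x < z \<and> z < x+1 \<and> ((x+1) powr (-s) - x powr (-s) = (x+1-x) * (-s * z powr (-s-1)))"
  proof (rule MVT2)
    fix t assume "x \<le> t" "t \<le> x+1"
    then have "((\<lambda>z. z powr (-s)) has_real_derivative (-s) * t powr (-s - 1)) (at t)"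
      using assms by (intro has_real_derivative_powr) auto
    then show "((\<lambda>z. z powr (-s)) has_real_derivative -s * t powr (-s - 1)) (at t)" by simp
  qed (simp)
  then obtain z where z: "x < z" "z < x+1" "(x+1) powr (-s) - x powr (-s) = -s * z powr (-s-1)" by auto
  have "z powr (-s-1) \<ge> (x+1) powr (-s-1)" using z assms by (intro powr_mono2') auto
  then have "s * (x+1) powr (-s-1) \<le> s * z powr (-s-1)" using assms by (simp add: mult_left_mono)
  then show ?thesis using z(3) by linarith
qed
lemma LA:
  fixes a :: "nat \<Rightarrow> real" and \<beta> C \<nu> :: real and m n :: nat
  assumes "\<beta> > 0" and "C > 0"
    and nonneg: "\<And>j. j \<ge> 1 \<Longrightarrow> 0 \<le> a j"
    and bound: "\<And>j. j \<ge> 1 \<Longrightarrow> a j \<le> C * real j powr (-1 - \<beta>)"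
    and "m \<ge> 1" and "1 \<le> \<nu>" and "\<nu> < 1 + \<beta>" and "n \<ge> m"
  shows "(\<Sum>i\<in>{m..<n}. (a i - a (Suc i)) * real i powr \<nu>) + a n * real n powr \<nu>
     \<le> C * real m powr (-(\<beta>+1-\<nu>)) + C * \<nu> / (\<beta>+1-\<nu>) * (real m powr (-(\<beta>+1-\<nu>)) - real n powr (-(\<beta>+1-\<nu>)))"
  using \<open>n \<ge> m\<close>
proof (induction n rule: dec_induct)
  case base
  have "a m * real m powr \<nu> \<le> C * real m powr (-1 - \<beta>) * real m powr \<nu>"
    using bound[of m] assms by (intro mult_right_mono) auto
  also have "\<dots> = C * real m powr (-(\<beta>+1-\<nu>))"
    by (simp add: mult.assoc powr_add[symmetric] algebra_simps)
  finally show ?case by simp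
next
  case (step n)
  define s where "s = \<beta>+1-\<nu>"
  have s: "s > 0" using assms unfolding s_def by simp
  have n1: "real n \<ge> 1" using step assms by simp
  have "a (Suc n) * (real (Suc n) powr \<nu> - real n powr \<nu>) \<le> C * real (Suc n) powr (-1 - \<beta>) * (\<nu> * real (Suc n) powr (\<nu>-1))"
  proof (rule mult_mono)
    show "a (Suc n) \<le> C * real (Suc n) powr (-1 - \<beta>)" using bound[of "Suc n"] by simp
    show "real (Suc n) powr \<nu> - real n powr \<nu> \<le> \<nu> * real (Suc n) powr (\<nu>-1)"
      using L1[OF n1 assms(6)] by (simp add: add.commute)
    show "0 \<le> C * real (Suc n) powr (-1 - \<beta>)" using assms by simp
    show "0 \<le> real (Suc n) powr \<nu> - real n powr \<nu>" using assms by (simp add: powr_mono2)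
  qed
  also have "\<dots> = C * \<nu> * real (Suc n) powr (-s-1)"
    by (simp add: s_def powr_add[symmetric] mult_ac)
  also have "\<dots> = C * \<nu> / s * (s * real (Suc n) powr (-s-1))" using s by simp
  also have "\<dots> \<le> C * \<nu> / s * (real n powr (-s) - real (Suc n) powr (-s))"
    using L2[OF n1 s] s assms by (intro mult_left_mono) (auto simp: add.commute)
  finally have key: "a (Suc n) * (real (Suc n) powr \<nu> - real n powr \<nu>) \<le> C * \<nu> / s * (real n powr (-s) - real (Suc n) powr (-s))" .
  have "(\<Sum>i\<in>{m..<Suc n}. (a i - a (Suc i)) * real i powr \<nu>) + a (Suc n) * real (Suc n) powr \<nu>
     = ((\<Sum>i\<in>{m..<n}. (a i - a (Suc i)) * real i powr \<nu>) + a n * real n powr \<nu>) + a (Suc n) * (real (Suc n) powr \<nu> - real n powr \<nu>)"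
    using step by (simp add: algebra_simps)
  then show ?case using step.IH key unfolding s_def by (simp add: algebra_simps)
qed
theorem lemma1p9:
  fixes a :: "nat \<Rightarrow> real" and \<beta> C \<nu> :: real and k m :: nat
  assumes "\<beta> > 0" and "C > 0"
    and mono: "\<And>j. j \<ge> 1 \<Longrightarrow> a (Suc j) \<le> a j"
    and nonneg: "\<And>j. j \<ge> 1 \<Longrightarrow> 0 \<le> a j"
    and bound: "\<And>j. j \<ge> 1 \<Longrightarrow> a j \<le> C * real j powr (-1 - \<beta>)"
    and "k \<ge> 1" and "m \<ge> 1"
    and "1 \<le> \<nu>" and "\<nu> < 1 + \<beta>"
  shows "summable (\<lambda>i. (a (i + m) - a (i + m + k)) * real (i + m) powr \<nu>)
    \<and> (\<Sum>i. (a (i + m) - a (i + m + k)) * real (i + m) powr \<nu>)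
        \<le> C * real k * ((\<beta> + 1) / (\<beta> + 1 - \<nu>)) * real m powr (\<nu> - 1 - \<beta>)"
proof -
  define s where "s = \<beta>+1-\<nu>"
  have s: "s > 0" using assms unfolding s_def by simp
  define B0 where "B0 = C * ((\<beta> + 1) / s) * real m powr (\<nu> - 1 - \<beta>)"
  define b where "b i = (a i - a (Suc i)) * real i powr \<nu>" for i
  have b0: "b i \<ge> 0" if "i \<ge> 1" for i using mono[OF that] unfolding b_def by simp
  have B0pos: "B0 \<ge> 0" using s assms unfolding B0_def by simp
  have LB: "(\<Sum>i\<in>{m..<n}. b i) \<le> B0" for n
  proof (cases "m \<le> n")
    case True
    have "(\<Sum>i\<in>{m..<n}. b i) \<le> (\<Sum>i\<in>{m..<n}. b i) + a n * real n powr \<nu>"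
      using nonneg[of n] True assms by simp
    also have "\<dots> \<le> C * real m powr (-s) + C * \<nu> / s * (real m powr (-s) - real n powr (-s))"
      using LA[of \<beta> C a m \<nu> n] assms True unfolding b_def s_def by simp
    also have "\<dots> \<le> C * real m powr (-s) + C * \<nu> / s * real m powr (-s)"
    proof -
      have "C * \<nu> / s \<ge> 0" using s assms by simp
      then show ?thesis by (intro add_left_mono mult_left_mono) auto
    qed
    also have "\<dots> = B0" unfolding B0_def using s
      by (simp add: s_def field_simps)
    finally show ?thesis .
  qed (use B0pos in simp)
  have amono: "a (j + l) \<le> a j" if "j \<ge> 1" for j l
  proof (induction l)
    case (Suc l) then show ?case using mono[of "j+l"] that by simp
  qed simp
  have term0: "(a (i + m) - a (i + m + k)) * real (i + m) powr \<nu> \<ge> 0" for i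
    using amono[of "i+m" k] assms by simp
  have part: "(\<Sum>i<N. (a (i + m) - a (i + m + k)) * real (i + m) powr \<nu>) \<le> real k * B0" for N
  proof -
    have "(\<Sum>i<N. (a (i + m) - a (i + m + k)) * real (i + m) powr \<nu>)
        = (\<Sum>j\<in>{m..<N+m}. (a j - a (j + k)) * real j powr \<nu>)"
      using sum.shift_bounds_nat_ivl[of "\<lambda>j. (a j - a (j + k)) * real j powr \<nu>" 0 m N]
      by (simp add: atLeast0LessThan)
    also have "\<dots> = (\<Sum>j\<in>{m..<N+m}. \<Sum>l<k. (a (j+l) - a (Suc (j+l))) * real j powr \<nu>)"
    proof (rule sum.cong[OF refl])
      fix j
      have "(\<Sum>l<k. a (j+l) - a (Suc (j+l))) = a (j+0) - a (j+k)"
        using sum_lessThan_telescope'[of "\<lambda>l. a (j+l)" k] by simp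
      then show "(a j - a (j + k)) * real j powr \<nu> = (\<Sum>l<k. (a (j+l) - a (Suc (j+l))) * real j powr \<nu>)"
        by (simp add: sum_distrib_right[symmetric])
    qed
    also have "\<dots> = (\<Sum>l<k. \<Sum>j\<in>{m..<N+m}. (a (j+l) - a (Suc (j+l))) * real j powr \<nu>)"
      by (rule sum.swap)
    also have "\<dots> \<le> (\<Sum>l<k. \<Sum>j\<in>{m..<N+m}. b (j+l))"
    proof (intro sum_mono)
      fix l j assume "j \<in> {m..<N+m}"
      then have j: "j \<ge> 1" using assms by simp
      have "a (Suc (j+l)) \<le> a (j+l)" using mono[of "j+l"] j by simp
      moreover have "real j powr \<nu> \<le> real (j+l) powr \<nu>" using assms by (intro powr_mono2) auto
      ultimately show "(a (j+l) - a (Suc (j+l))) * real j powr \<nu> \<le> b (j+l)"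
        unfolding b_def by (intro mult_left_mono) auto
    qed
    also have "\<dots> = (\<Sum>l<k. \<Sum>i\<in>{m+l..<N+m+l}. b i)"
    proof (rule sum.cong[OF refl])
      fix l show "(\<Sum>j\<in>{m..<N+m}. b (j+l)) = (\<Sum>i\<in>{m+l..<N+m+l}. b i)"
        using sum.shift_bounds_nat_ivl[of b m l "N+m"] by simp
    qed
    also have "\<dots> \<le> (\<Sum>l<k. \<Sum>i\<in>{m..<N+m+l}. b i)"
    proof (intro sum_mono sum_mono2)
      fix l i assume "i \<in> {m..<N+m+l} - {m+l..<N+m+l}"
      then show "0 \<le> b i" using b0 assms by simp
    qed auto
    also have "\<dots> \<le> (\<Sum>l<k. B0)" by (intro sum_mono LB)
    finally show ?thesis by simp
  qed
  have summ: "summable (\<lambda>i. (a (i + m) - a (i + m + k)) * real (i + m) powr \<nu>)"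
    by (rule summableI_nonneg_bounded[OF term0 part])
  moreover have "(\<Sum>i. (a (i + m) - a (i + m + k)) * real (i + m) powr \<nu>) \<le> real k * B0"
    by (rule suminf_le_const[OF summ part])
  ultimately show ?thesis unfolding B0_def s_def by (simp add: mult_ac)
qed
end
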